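(* Let $E_3=(S^*,V_1^*,I_1^*,I_2^* )$ be an endemic equilibrium of the model with all components positive. Suppose that for every $(S,V_1,I_1,I_2)$ with positive components other than $E_3$, $$F_1(S^*,I_1^* )\left(2-\tfrac{S^*}{S}-\tfrac{S\,g_1(S,I_1)}{S^*g_1(S^*,I_1^* )}\right)+F_2(S^*,I_2^* )\left(2-\tfrac{S^*}{S}-\tfrac{S\,g_2(S,I_2)}{S^*g_2(S^*,I_2^* )}\right)+rS^*\left(3-\tfrac{S^*}{S}-\tfrac{V_1}{V_1^*}-\tfrac{SV_1^*}{S^*V_1}\right)+\mu S^*\left(2-\tfrac{S^*}{S}-\tfrac{S}{S^*}\right)+I_1\left(S^*g_1(S,I_1)-\alpha_1\right)+I_2\left(S^*g_2(S,I_2)+kV_1^*-\alpha_2\right)<0.$$ Then $E_3$ is globally asymptotically stable.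
   Context: The model is $\dot S=\Lambda-F_1(S,I_1)-F_2(S,I_2)-\lambda S$, $\dot V_1=rS-(\mu+kI_2)V_1$, $\dot I_1=F_1(S,I_1)-\alpha_1I_1$, $\dot I_2=F_2(S,I_2)+kI_2V_1-\alpha_2I_2$ on $\mathbb{R}^4_+$. The constants $\Lambda,\mu,r,k,\gamma_1,\gamma_2>0$ and $v_1,v_2\ge0$; $\lambda=r+\mu$ and $\alpha_i=\gamma_i+v_i+\mu$. For $i=1,2$ the incidence functions satisfy: - (H1) $F_i(S,I_i)=I_if_i(S,I_i)$ with $F_i,f_i\in C^2(\mathbb{R}^2_+,\mathbb{R}_+)$ and $F_i(0,I_i)=F_i(S,0)=0$; - (H2) $\partial f_i/\partial S>0$ and $\partial f_i/\partial I_i\le0$; - (H3) $\lim_{I_i\to0^+}F_i(S,I_i)/I_i$ exists and is positive for $S>0$; - (H4) $f_i(S,I_i)=Sg_i(S,I_i)$ for some function $g_i$. *)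

theory Defs
  imports "HOL-Analysis.Analysis"
begin

definition Rplus2 :: "(real \<times> real) set" where
  "Rplus2 = {z. fst z \<ge> 0 \<and> snd z \<ge> 0}"

definition C1_on :: "'a::real_normed_vector set \<Rightarrow> ('a \<Rightarrow> 'b::real_normed_vector) \<Rightarrow> bool" where
  "C1_on A h \<longleftrightarrow> (\<exists>h'. (\<forall>z\<in>A. (h has_derivative blinfun_apply (h' z)) (at z within A))
                       \<and> continuous_on A h')"

definition C2_on :: "'a::real_normed_vector set \<Rightarrow> ('a \<Rightarrow> 'b::real_normed_vector) \<Rightarrow> bool" where
  "C2_on A h \<longleftrightarrow> (\<exists>h'. (\<forall>z\<in>A. (h has_derivative blinfun_apply (h' z)) (at z within A))
                       \<and> C1_on A h')"

definition incidence_hyps ::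
  "(real \<Rightarrow> real \<Rightarrow> real) \<Rightarrow> (real \<Rightarrow> real \<Rightarrow> real) \<Rightarrow> (real \<Rightarrow> real \<Rightarrow> real) \<Rightarrow> bool" where
  "incidence_hyps F f g \<longleftrightarrow>
     \<comment> \<open>(H1)\<close>
     (\<forall>S I. S \<ge> 0 \<and> I \<ge> 0 \<longrightarrow> F S I = I * f S I) \<and>
     C2_on Rplus2 (\<lambda>z. F (fst z) (snd z)) \<and> C2_on Rplus2 (\<lambda>z. f (fst z) (snd z)) \<and>
     (\<forall>S I. S \<ge> 0 \<and> I \<ge> 0 \<longrightarrow> F S I \<ge> 0 \<and> f S I \<ge> 0) \<and>
     (\<forall>I \<ge> 0. F 0 I = 0) \<and> (\<forall>S \<ge> 0. F S 0 = 0) \<and>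
     \<comment> \<open>(H2)\<close>
     (\<forall>S I. S \<ge> 0 \<and> I \<ge> 0 \<longrightarrow>
        (\<exists>D. ((\<lambda>x. f x I) has_real_derivative D) (at S within {0..}) \<and> D > 0)) \<and>
     (\<forall>S I. S \<ge> 0 \<and> I \<ge> 0 \<longrightarrow>
        (\<exists>D. ((\<lambda>y. f S y) has_real_derivative D) (at I within {0..}) \<and> D \<le> 0)) \<and>
     \<comment> \<open>(H3)\<close>
     (\<forall>S > 0. \<exists>L > 0. ((\<lambda>I. F S I / I) \<longlongrightarrow> L) (at_right 0)) \<and>
     \<comment> \<open>(H4)\<close>
     (\<forall>S I. S \<ge> 0 \<and> I \<ge> 0 \<longrightarrow> f S I = S * g S I)"

text \<open>A solution of the model on [0, infinity), staying in R^4_+.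
  Parameters: Lam = Lambda, mu, r, k, gam1, gam2, v1, v2; lambda = r + mu, alpha_i = gam_i + v_i + mu.\<close>
definition is_solution ::
  "real \<Rightarrow> real \<Rightarrow> real \<Rightarrow> real \<Rightarrow> real \<Rightarrow> real \<Rightarrow> real \<Rightarrow> real \<Rightarrow>
   (real \<Rightarrow> real \<Rightarrow> real) \<Rightarrow> (real \<Rightarrow> real \<Rightarrow> real) \<Rightarrow>
   (real \<Rightarrow> real \<times> real \<times> real \<times> real) \<Rightarrow> bool" where
  "is_solution Lam mu r k gam1 gam2 v1 v2 F1 F2 x \<longleftrightarrow>
     (\<forall>t \<ge> 0. let (S, V, I1, I2) = x t in S \<ge> 0 \<and> V \<ge> 0 \<and> I1 \<ge> 0 \<and> I2 \<ge> 0) \<and>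
     (\<forall>t \<ge> 0.
        let (S, V, I1, I2) = x t in
        ((\<lambda>s. fst (x s)) has_real_derivative
            (Lam - F1 S I1 - F2 S I2 - (r + mu) * S)) (at t within {0..}) \<and>
        ((\<lambda>s. fst (snd (x s))) has_real_derivative
            (r * S - (mu + k * I2) * V)) (at t within {0..}) \<and>
        ((\<lambda>s. fst (snd (snd (x s)))) has_real_derivative
            (F1 S I1 - (gam1 + v1 + mu) * I1)) (at t within {0..}) \<and>
        ((\<lambda>s. snd (snd (snd (x s)))) has_real_derivative
            (F2 S I2 + k * I2 * V - (gam2 + v2 + mu) * I2)) (at t within {0..}))"

definition is_equilibrium ::
  "real \<Rightarrow> real \<Rightarrow> real \<Rightarrow> real \<Rightarrow> real \<Rightarrow> real \<Rightarrow> real \<Rightarrow> real \<Rightarrow>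
   (real \<Rightarrow> real \<Rightarrow> real) \<Rightarrow> (real \<Rightarrow> real \<Rightarrow> real) \<Rightarrow>
   real \<times> real \<times> real \<times> real \<Rightarrow> bool" where
  "is_equilibrium Lam mu r k gam1 gam2 v1 v2 F1 F2 E \<longleftrightarrow>
     (let (S, V, I1, I2) = E in
        Lam - F1 S I1 - F2 S I2 - (r + mu) * S = 0 \<and>
        r * S - (mu + k * I2) * V = 0 \<and>
        F1 S I1 - (gam1 + v1 + mu) * I1 = 0 \<and>
        F2 S I2 + k * I2 * V - (gam2 + v2 + mu) * I2 = 0)"

definition pos4 :: "real \<times> real \<times> real \<times> real \<Rightarrow> bool" where
  "pos4 z \<longleftrightarrow> (let (S, V, I1, I2) = z in S > 0 \<and> V > 0 \<and> I1 > 0 \<and> I2 > 0)"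

definition globally_asymptotically_stable ::
  "real \<Rightarrow> real \<Rightarrow> real \<Rightarrow> real \<Rightarrow> real \<Rightarrow> real \<Rightarrow> real \<Rightarrow> real \<Rightarrow>
   (real \<Rightarrow> real \<Rightarrow> real) \<Rightarrow> (real \<Rightarrow> real \<Rightarrow> real) \<Rightarrow>
   real \<times> real \<times> real \<times> real \<Rightarrow> bool" where
  "globally_asymptotically_stable Lam mu r k gam1 gam2 v1 v2 F1 F2 E \<longleftrightarrow>
     (\<forall>\<epsilon> > 0. \<exists>\<delta> > 0. \<forall>x. is_solution Lam mu r k gam1 gam2 v1 v2 F1 F2 x \<and> pos4 (x 0)
          \<and> dist (x 0) E < \<delta> \<longrightarrow> (\<forall>t \<ge> 0. dist (x t) E < \<epsilon>)) \<and>
     (\<forall>x. is_solution Lam mu r k gam1 gam2 v1 v2 F1 F2 x \<and> pos4 (x 0)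
          \<longrightarrow> (x \<longlongrightarrow> E) at_top)"

end

theory Submission
  imports Defs
begin



definition W :: "real \<Rightarrow> real \<Rightarrow> real" where
  "W a v = v - a - a * ln (v / a)"

lemma W_nonneg: assumes "a > 0" "v > 0" shows "W a v \<ge> 0"
proof -
  have "ln (v/a) \<le> v/a - 1" using assms by (intro ln_le_minus_one) simp
  hence "a * ln (v/a) \<le> a * (v/a - 1)" using assms by (intro mult_left_mono) auto
  also have "\<dots> = v - a" using assms by (simp add: field_simps)
  finally show ?thesis unfolding W_def by simp
qed

lemma ln_strict: fixes u :: real assumes "u > 0" "u \<noteq> 1" shows "ln u < u - 1"
  using ln_le_minus_one[OF assms(1)] ln_eq_minus_one[OF assms(1)] assms(2) by force

lemma W_pos: assumes "a > 0" "v > 0" "v \<noteq> a" shows "W a v > 0"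
proof -
  have "ln (v/a) < v/a - 1" using assms by (intro ln_strict) auto
  hence "a * ln (v/a) < a * (v/a - 1)" using assms by (intro mult_strict_left_mono) auto
  also have "\<dots> = v - a" using assms by (simp add: field_simps)
  finally show ?thesis unfolding W_def by simp
qed

lemma W_at: "a > 0 \<Longrightarrow> W a a = 0" by (simp add: W_def)

lemma W_mono_up: assumes "a > 0" "a \<le> u" "u \<le> v" shows "W a u \<le> W a v"
proof -
  have "ln (v/u) \<le> v/u - 1" using assms by (intro ln_le_minus_one) simp
  hence "a * ln (v/u) \<le> a * (v/u - 1)" using assms by (intro mult_left_mono) auto
  also have "\<dots> \<le> u * (v/u - 1)" using assms by (intro mult_right_mono) (auto simp: field_simps)
  also have "\<dots> = v - u" using assms by (simp add: field_simps)
  finally have "a * ln (v/u) \<le> v - u" .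
  moreover have "ln (v/a) = ln (v/u) + ln (u/a)" using assms by (simp add: ln_div)
  ultimately show ?thesis unfolding W_def by (simp add: algebra_simps)
qed

lemma W_mono_down: assumes "a > 0" "0 < u" "u \<le> v" "v \<le> a" shows "W a v \<le> W a u"
proof -
  have "ln (u/v) \<le> u/v - 1" using assms by (intro ln_le_minus_one) simp
  hence "a * ln (u/v) \<le> a * (u/v - 1)" using assms by (intro mult_left_mono) auto
  also have "\<dots> \<le> v * (u/v - 1)" using assms by (intro mult_right_mono_neg) (auto simp: field_simps)
  also have "\<dots> = u - v" using assms by (simp add: field_simps)
  finally have "a * ln (u/v) \<le> u - v" .
  moreover have "ln (u/a) = ln (u/v) + ln (v/a)" using assms by (simp add: ln_div)
  ultimately show ?thesis unfolding W_def by (simp add: algebra_simps)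
qed

lemma W_close: assumes "a > 0" "e > 0" shows "\<exists>c>0. \<forall>v>0. W a v < c \<longrightarrow> \<bar>v - a\<bar> < e"
proof -
  define e' where "e' = min e (a/2)"
  have e': "e' > 0" "e' \<le> e" "e' < a" using assms by (auto simp: e'_def)
  define c where "c = min (W a (a + e)) (W a (a - e'))"
  have "c > 0" unfolding c_def using assms e' by (auto intro!: W_pos)
  moreover have "\<bar>v - a\<bar> < e" if "v > 0" "W a v < c" for v
  proof (rule ccontr)
    assume "\<not> ?thesis"
    hence "v \<ge> a + e \<or> v \<le> a - e'" using e' by auto
    thus False
    proof
      assume "v \<ge> a + e"
      hence "W a (a+e) \<le> W a v" using assms by (intro W_mono_up) auto
      thus False using that by (auto simp: c_def)
    next
      assume "v \<le> a - e'"
      hence "W a (a-e') \<le> W a v" using assms e' that by (intro W_mono_down) auto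
      thus False using that by (auto simp: c_def)
    qed
  qed
  ultimately show ?thesis by blast
qed

lemma W_lower: assumes "a > 0" "v > 0" "W a v \<le> C" shows "a * exp (- (C + a) / a) \<le> v"
proof -
  have "- a - a * ln (v/a) \<le> C" using assms unfolding W_def by simp
  hence "- (C + a) / a \<le> ln (v/a)" using assms by (simp add: field_simps)
  hence "exp (- (C + a) / a) \<le> v / a" using assms
    by (metis divide_pos_pos exp_ln exp_le_cancel_iff)
  thus ?thesis using assms by (simp add: field_simps)
qed

lemma ln_half: fixes y :: real assumes "y > 0" shows "ln y \<le> y / 2"
proof -
  have "ln y = ln 2 + ln (y/2)" using assms by (simp add: ln_div)
  also have "ln (y/2) \<le> y/2 - 1" using assms by (intro ln_le_minus_one) simp
  moreover have "ln (2::real) \<le> 1" using ln_le_minus_one[of 2] by simp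
  ultimately show ?thesis by simp
qed

lemma W_upper: assumes "a > 0" "v > 0" "W a v \<le> C" shows "v \<le> 2 * (C + a)"
proof -
  have "ln (v/a) \<le> v/a/2" using assms by (intro ln_half) simp
  hence "a * ln (v/a) \<le> a * (v/a/2)" using assms by (intro mult_left_mono) auto
  also have "\<dots> = v/2" using assms by simp
  finally show ?thesis using assms unfolding W_def by simp
qed



lemma inc_H1: "incidence_hyps F f g \<Longrightarrow> \<forall>S I. S \<ge> 0 \<and> I \<ge> 0 \<longrightarrow> F S I = I * f S I"
  unfolding incidence_hyps_def by (rule conjunct1)
lemma inc_C2: "incidence_hyps F f g \<Longrightarrow> C2_on Rplus2 (\<lambda>z. f (fst z) (snd z))"
  unfolding incidence_hyps_def by (drule conjunct2, drule conjunct2, rule conjunct1)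
lemma inc_H2: "incidence_hyps F f g \<Longrightarrow> (\<forall>S I. S \<ge> 0 \<and> I \<ge> 0 \<longrightarrow>
        (\<exists>D. ((\<lambda>x. f x I) has_real_derivative D) (at S within {0..}) \<and> D > 0))"
  unfolding incidence_hyps_def by (drule conjunct2, drule conjunct2, drule conjunct2, drule conjunct2,
     drule conjunct2, drule conjunct2, rule conjunct1)
lemma inc_H4: "incidence_hyps F f g \<Longrightarrow> (\<forall>S I. S \<ge> 0 \<and> I \<ge> 0 \<longrightarrow> f S I = S * g S I)"
  unfolding incidence_hyps_def by (drule conjunct2, drule conjunct2, drule conjunct2, drule conjunct2,
     drule conjunct2, drule conjunct2, drule conjunct2, drule conjunct2, drule conjunct2, assumption)


lemma deriv_at0: "(f has_real_derivative D) (at t within {0..}) \<Longrightarrow> 0 < t \<Longrightarrow> (f has_real_derivative D) (at t)"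
proof -
  assume a: "(f has_real_derivative D) (at t within {0..})" "0 < t"
  have "at t within {0..} = at t" by (rule at_within_interior) (use a(2) in \<open>simp add: interior_real_atLeast\<close>)
  thus ?thesis using a(1) by simp
qed

lemma cont_from_deriv:
  assumes "\<And>t. t \<in> {a..b} \<Longrightarrow> \<exists>D. (f has_real_derivative D) (at t within {0..})" "0 \<le> a"
  shows "continuous_on {a..b} f"
  unfolding continuous_on_eq_continuous_within
proof
  fix t assume t: "t \<in> {a..b}"
  then obtain D where "(f has_real_derivative D) (at t within {0..})" using assms(1) by blast
  hence "continuous (at t within {0..}) f" by (rule DERIV_continuous)
  moreover have "{a..b} \<subseteq> {0..}" using assms(2) by auto
  ultimately show "continuous (at t within {a..b}) f" by (rule continuous_within_subset)
qed

lemma f_pos: assumes "incidence_hyps F f g" "S > 0" "I \<ge> 0" shows "f S I > 0"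
proof -
  have H2: "\<And>S. S \<ge> 0 \<Longrightarrow> \<exists>D. ((\<lambda>x. f x I) has_real_derivative D) (at S within {0..}) \<and> D > 0"
    using inc_H2[OF assms(1)] assms(3) by blast
  have f0: "f 0 I = 0" using inc_H4[OF assms(1)] assms(3) by simp
  have cont: "continuous_on {0..S} (\<lambda>x. f x I)"
  proof (rule cont_from_deriv)
    fix t assume "t \<in> {0..S}"
    then obtain D where "((\<lambda>x. f x I) has_real_derivative D) (at t within {0..})" using H2[of t] by auto
    thus "\<exists>D. ((\<lambda>x. f x I) has_real_derivative D) (at t within {0..})" by blast
  qed simp
  have dif: "(\<lambda>x. f x I) differentiable (at x)" if x0: "0 < x" "x < S" for x
  proof -
    obtain D where D: "((\<lambda>x. f x I) has_real_derivative D) (at x within {0..})" using H2[of x] x0 by auto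
    have "((\<lambda>x. f x I) has_real_derivative D) (at x)" by (rule deriv_at0[OF D x0(1)])
    thus ?thesis unfolding real_differentiable_def by blast
  qed
  obtain l z where lz: "0 < z" "z < S" "((\<lambda>x. f x I) has_real_derivative l) (at z)"
     "f S I - f 0 I = (S - 0) * l"
    using MVT[OF assms(2) cont dif] by blast
  obtain D where D: "((\<lambda>x. f x I) has_real_derivative D) (at z within {0..})" "D > 0"
    using H2[of z] lz(1) by auto
  have "D = l" by (rule DERIV_unique[OF deriv_at0[OF D(1) lz(1)] lz(3)])
  thus ?thesis using lz D f0 assms(2) by simp
qed

lemma f_cont: assumes "incidence_hyps F f g" shows "continuous_on Rplus2 (\<lambda>z. f (fst z) (snd z))"
proof -
  have "C2_on Rplus2 (\<lambda>z. f (fst z) (snd z))" using inc_C2[OF assms] .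
  then obtain h' where h: "\<forall>z\<in>Rplus2. ((\<lambda>z. f (fst z) (snd z)) has_derivative blinfun_apply (h' z)) (at z within Rplus2)"
    using C2_on_def by (metis (no_types, lifting))
  show ?thesis unfolding continuous_on_eq_continuous_within
  proof
    fix z assume "z \<in> Rplus2"
    with h show "continuous (at z within Rplus2) (\<lambda>z. f (fst z) (snd z))"
      by (intro has_derivative_continuous) blast
  qed
qed





lemma lie_eq:
  fixes S V I1 I2 Ss Vs I1s I2s G1 G2 g1s g2s Lam r mu k a1 a2 F1 F2 F1s F2s :: real
  assumes pos: "S > 0" "V > 0" "I1 > 0" "I2 > 0" "Ss > 0" "Vs > 0" "I1s > 0" "I2s > 0"
    and g: "g1s \<noteq> 0" "g2s \<noteq> 0"
    and hF: "F1 = I1*S*G1" "F2 = I2*S*G2" "F1s = I1s*Ss*g1s" "F2s = I2s*Ss*g2s"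
    and eL: "Lam - F1s - F2s - (r+mu)*Ss = 0"
    and er: "r*Ss - (mu + k*I2s)*Vs = 0"
    and e1: "F1s - a1*I1s = 0"
    and e2: "F2s + k*I2s*Vs - a2*I2s = 0"
  shows "(1 - Ss/S)*(Lam - F1 - F2 - (r+mu)*S) + (1 - Vs/V)*(r*S - (mu + k*I2)*V)
        + (1 - I1s/I1)*(F1 - a1*I1) + (1 - I2s/I2)*(F2 + k*I2*V - a2*I2)
      = F1s * (2 - Ss / S - S * G1 / (Ss * g1s))
         + F2s * (2 - Ss / S - S * G2 / (Ss * g2s))
         + r * Ss * (3 - Ss / S - V / Vs - S * Vs / (Ss * V))
         + mu * Ss * (2 - Ss / S - S / Ss)
         + I1 * (Ss * G1 - a1)
         + I2 * (Ss * G2 + k * Vs - a2)"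
proof -
  have "I1s*(Ss*g1s) = I1s*a1" using e1 hF by (simp add: algebra_simps)
  hence a1: "a1 = Ss*g1s" using pos by simp
  have "I2s*(Ss*g2s + k*Vs) = I2s*a2" using e2 hF by (simp add: algebra_simps)
  hence a2: "a2 = Ss*g2s + k*Vs" using pos by simp
  have r: "r = (mu + k*I2s)*Vs/Ss" using er pos by (simp add: field_simps)
  have L: "Lam = I1s*Ss*g1s + I2s*Ss*g2s + (r+mu)*Ss" using eL hF by simp
  show ?thesis unfolding a1 a2 L hF unfolding r using pos g by (simp add: field_simps)
qed


locale model =
  fixes Lam mu r k gam1 gam2 v1 v2 :: real
    and F1 F2 f1 f2 g1 g2 :: "real \<Rightarrow> real \<Rightarrow> real"
    and Ss Vs I1s I2s :: real
  assumes pars: "Lam > 0" "mu > 0" "r > 0" "k > 0" "gam1 > 0" "gam2 > 0" "v1 \<ge> 0" "v2 \<ge> 0"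
    and inc1: "incidence_hyps F1 f1 g1" and inc2: "incidence_hyps F2 f2 g2"
    and eq: "is_equilibrium Lam mu r k gam1 gam2 v1 v2 F1 F2 (Ss, Vs, I1s, I2s)"
    and Epos: "Ss > 0" "Vs > 0" "I1s > 0" "I2s > 0"
    and hyp: "\<And>S V I1 I2. S > 0 \<Longrightarrow> V > 0 \<Longrightarrow> I1 > 0 \<Longrightarrow> I2 > 0 \<Longrightarrow>
           (S, V, I1, I2) \<noteq> (Ss, Vs, I1s, I2s) \<Longrightarrow>
           F1 Ss I1s * (2 - Ss / S - S * g1 S I1 / (Ss * g1 Ss I1s))
         + F2 Ss I2s * (2 - Ss / S - S * g2 S I2 / (Ss * g2 Ss I2s))
         + r * Ss * (3 - Ss / S - V / Vs - S * Vs / (Ss * V))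
         + mu * Ss * (2 - Ss / S - S / Ss)
         + I1 * (Ss * g1 S I1 - (gam1 + v1 + mu))
         + I2 * (Ss * g2 S I2 + k * Vs - (gam2 + v2 + mu)) < 0"
begin

definition Dexp :: "real \<Rightarrow> real \<Rightarrow> real \<Rightarrow> real \<Rightarrow> real" where
  "Dexp S V I1 I2 = F1 Ss I1s * (2 - Ss / S - S * g1 S I1 / (Ss * g1 Ss I1s))
         + F2 Ss I2s * (2 - Ss / S - S * g2 S I2 / (Ss * g2 Ss I2s))
         + r * Ss * (3 - Ss / S - V / Vs - S * Vs / (Ss * V))
         + mu * Ss * (2 - Ss / S - S / Ss)
         + I1 * (Ss * g1 S I1 - (gam1 + v1 + mu))
         + I2 * (Ss * g2 S I2 + k * Vs - (gam2 + v2 + mu))"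

definition Dc :: "real \<times> real \<times> real \<times> real \<Rightarrow> real" where
  "Dc z = (let S = fst z; V = fst (snd z); I1 = fst (snd (snd z)); I2 = snd (snd (snd z)) in
           F1 Ss I1s * (2 - Ss / S - S * (f1 S I1 / S) / (Ss * g1 Ss I1s))
         + F2 Ss I2s * (2 - Ss / S - S * (f2 S I2 / S) / (Ss * g2 Ss I2s))
         + r * Ss * (3 - Ss / S - V / Vs - S * Vs / (Ss * V))
         + mu * Ss * (2 - Ss / S - S / Ss)
         + I1 * (Ss * (f1 S I1 / S) - (gam1 + v1 + mu))
         + I2 * (Ss * (f2 S I2 / S) + k * Vs - (gam2 + v2 + mu)))"

definition Lf :: "real \<times> real \<times> real \<times> real \<Rightarrow> real" where
  "Lf z = W Ss (fst z) + W Vs (fst (snd z)) + W I1s (fst (snd (snd z))) + W I2s (snd (snd (snd z)))"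

definition P :: "real \<times> real \<times> real \<times> real \<Rightarrow> bool" where
  "P z \<longleftrightarrow> fst z > 0 \<and> fst (snd z) > 0 \<and> fst (snd (snd z)) > 0 \<and> snd (snd (snd z)) > 0"

definition E where "E = (Ss, Vs, I1s, I2s)"

lemma eqs: "Lam - F1 Ss I1s - F2 Ss I2s - (r + mu) * Ss = 0"
        "r * Ss - (mu + k * I2s) * Vs = 0"
        "F1 Ss I1s - (gam1 + v1 + mu) * I1s = 0"
        "F2 Ss I2s + k * I2s * Vs - (gam2 + v2 + mu) * I2s = 0"
  using eq unfolding is_equilibrium_def by auto

lemma Fform1: "S \<ge> 0 \<Longrightarrow> I \<ge> 0 \<Longrightarrow> F1 S I = I * S * g1 S I"
  using inc_H1[OF inc1] inc_H4[OF inc1] by simp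
lemma Fform2: "S \<ge> 0 \<Longrightarrow> I \<ge> 0 \<Longrightarrow> F2 S I = I * S * g2 S I"
  using inc_H1[OF inc2] inc_H4[OF inc2] by simp
lemma gform1: "S > 0 \<Longrightarrow> I \<ge> 0 \<Longrightarrow> g1 S I = f1 S I / S"
  using inc_H4[OF inc1] by simp
lemma gform2: "S > 0 \<Longrightarrow> I \<ge> 0 \<Longrightarrow> g2 S I = f2 S I / S"
  using inc_H4[OF inc2] by simp

lemma g1s_pos: "g1 Ss I1s > 0"
  using f_pos[OF inc1, of Ss I1s] gform1[of Ss I1s] Epos by simp
lemma g2s_pos: "g2 Ss I2s > 0"
  using f_pos[OF inc2, of Ss I2s] gform2[of Ss I2s] Epos by simp

lemma Dc_eq: "P z \<Longrightarrow> Dc z = Dexp (fst z) (fst (snd z)) (fst (snd (snd z))) (snd (snd (snd z)))"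
  unfolding Dc_def Dexp_def P_def Let_def using gform1 gform2 by simp

lemma Dexp_E: "Dexp Ss Vs I1s I2s = 0"
proof -
  have "(1 - Ss/Ss)*(Lam - F1 Ss I1s - F2 Ss I2s - (r+mu)*Ss) + (1 - Vs/Vs)*(r*Ss - (mu + k*I2s)*Vs)
        + (1 - I1s/I1s)*(F1 Ss I1s - (gam1 + v1 + mu)*I1s) + (1 - I2s/I2s)*(F2 Ss I2s + k*I2s*Vs - (gam2 + v2 + mu)*I2s)
      = Dexp Ss Vs I1s I2s"
    unfolding Dexp_def
    by (rule lie_eq) (use Epos g1s_pos g2s_pos eqs Fform1 Fform2 in auto)
  thus ?thesis using Epos by simp
qed

lemma Dexp_le: "S > 0 \<Longrightarrow> V > 0 \<Longrightarrow> I1 > 0 \<Longrightarrow> I2 > 0 \<Longrightarrow> Dexp S V I1 I2 \<le> 0"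
  using hyp[of S V I1 I2] Dexp_E unfolding Dexp_def by (cases "(S, V, I1, I2) = (Ss, Vs, I1s, I2s)") auto

lemma Dexp_lt: "S > 0 \<Longrightarrow> V > 0 \<Longrightarrow> I1 > 0 \<Longrightarrow> I2 > 0 \<Longrightarrow> (S, V, I1, I2) \<noteq> E \<Longrightarrow> Dexp S V I1 I2 < 0"
  using hyp[of S V I1 I2] unfolding Dexp_def E_def by auto

lemma W_deriv:
  assumes "(u has_real_derivative u') (at t within T)" "u t > 0" "a > 0"
  shows "((\<lambda>s. W a (u s)) has_real_derivative ((1 - a / u t) * u')) (at t within T)"
  unfolding W_def using assms by (auto intro!: derivative_eq_intros simp: field_simps)

lemma sol_at:
  assumes "is_solution Lam mu r k gam1 gam2 v1 v2 F1 F2 x" "t \<ge> 0"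
  shows "fst (x t) \<ge> 0 \<and> fst (snd (x t)) \<ge> 0 \<and> fst (snd (snd (x t))) \<ge> 0 \<and> snd (snd (snd (x t))) \<ge> 0"
    "((\<lambda>s. fst (x s)) has_real_derivative
            (Lam - F1 (fst (x t)) (fst (snd (snd (x t)))) - F2 (fst (x t)) (snd (snd (snd (x t)))) - (r + mu) * fst (x t))) (at t within {0..})"
    "((\<lambda>s. fst (snd (x s))) has_real_derivative
            (r * fst (x t) - (mu + k * snd (snd (snd (x t)))) * fst (snd (x t)))) (at t within {0..})"
    "((\<lambda>s. fst (snd (snd (x s)))) has_real_derivative
            (F1 (fst (x t)) (fst (snd (snd (x t)))) - (gam1 + v1 + mu) * fst (snd (snd (x t))))) (at t within {0..})"
    "((\<lambda>s. snd (snd (snd (x s)))) has_real_derivative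
            (F2 (fst (x t)) (snd (snd (snd (x t)))) + k * snd (snd (snd (x t))) * fst (snd (x t)) - (gam2 + v2 + mu) * snd (snd (snd (x t))))) (at t within {0..})"
proof -
  obtain S V I1 I2 where xt: "x t = (S, V, I1, I2)" by (metis prod_cases4)
  have A: "S \<ge> 0 \<and> V \<ge> 0 \<and> I1 \<ge> 0 \<and> I2 \<ge> 0"
    using assms xt unfolding is_solution_def by (metis (mono_tags, lifting) case_prod_conv)
  have B: "((\<lambda>s. fst (x s)) has_real_derivative
            (Lam - F1 S I1 - F2 S I2 - (r + mu) * S)) (at t within {0..}) \<and>
        ((\<lambda>s. fst (snd (x s))) has_real_derivative
            (r * S - (mu + k * I2) * V)) (at t within {0..}) \<and>
        ((\<lambda>s. fst (snd (snd (x s)))) has_real_derivative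
            (F1 S I1 - (gam1 + v1 + mu) * I1)) (at t within {0..}) \<and>
        ((\<lambda>s. snd (snd (snd (x s)))) has_real_derivative
            (F2 S I2 + k * I2 * V - (gam2 + v2 + mu) * I2)) (at t within {0..})"
    using assms xt unfolding is_solution_def by (metis (mono_tags, lifting) case_prod_conv)
  show "fst (x t) \<ge> 0 \<and> fst (snd (x t)) \<ge> 0 \<and> fst (snd (snd (x t))) \<ge> 0 \<and> snd (snd (snd (x t))) \<ge> 0"
    using A xt by simp
  show "((\<lambda>s. fst (x s)) has_real_derivative
            (Lam - F1 (fst (x t)) (fst (snd (snd (x t)))) - F2 (fst (x t)) (snd (snd (snd (x t)))) - (r + mu) * fst (x t))) (at t within {0..})"
    "((\<lambda>s. fst (snd (x s))) has_real_derivative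
            (r * fst (x t) - (mu + k * snd (snd (snd (x t)))) * fst (snd (x t)))) (at t within {0..})"
    "((\<lambda>s. fst (snd (snd (x s)))) has_real_derivative
            (F1 (fst (x t)) (fst (snd (snd (x t)))) - (gam1 + v1 + mu) * fst (snd (snd (x t))))) (at t within {0..})"
    "((\<lambda>s. snd (snd (snd (x s)))) has_real_derivative
            (F2 (fst (x t)) (snd (snd (snd (x t)))) + k * snd (snd (snd (x t))) * fst (snd (x t)) - (gam2 + v2 + mu) * snd (snd (snd (x t))))) (at t within {0..})"
    using B xt by simp_all
qed

lemma L_deriv:
  assumes "is_solution Lam mu r k gam1 gam2 v1 v2 F1 F2 x" "t \<ge> 0" "P (x t)"
  shows "((\<lambda>s. Lf (x s)) has_real_derivative
           Dexp (fst (x t)) (fst (snd (x t))) (fst (snd (snd (x t)))) (snd (snd (snd (x t))))) (at t within {0..})"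
proof -
  note d = sol_at[OF assms(1,2)]
  have pp: "fst (x t) > 0" "fst (snd (x t)) > 0" "fst (snd (snd (x t))) > 0" "snd (snd (snd (x t))) > 0"
    using assms(3) unfolding P_def by auto
  have "((\<lambda>s. Lf (x s)) has_real_derivative
      (1 - Ss/fst (x t))*(Lam - F1 (fst (x t)) (fst (snd (snd (x t)))) - F2 (fst (x t)) (snd (snd (snd (x t)))) - (r + mu) * fst (x t))
    + (1 - Vs/fst (snd (x t)))*(r * fst (x t) - (mu + k * snd (snd (snd (x t)))) * fst (snd (x t)))
    + (1 - I1s/fst (snd (snd (x t))))*(F1 (fst (x t)) (fst (snd (snd (x t)))) - (gam1 + v1 + mu) * fst (snd (snd (x t))))
    + (1 - I2s/snd (snd (snd (x t))))*(F2 (fst (x t)) (snd (snd (snd (x t)))) + k * snd (snd (snd (x t))) * fst (snd (x t)) - (gam2 + v2 + mu) * snd (snd (snd (x t))))) (at t within {0..})"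
    unfolding Lf_def
    by (intro DERIV_add W_deriv d(2-5)) (use pp Epos in auto)
  also have "(1 - Ss/fst (x t))*(Lam - F1 (fst (x t)) (fst (snd (snd (x t)))) - F2 (fst (x t)) (snd (snd (snd (x t)))) - (r + mu) * fst (x t))
    + (1 - Vs/fst (snd (x t)))*(r * fst (x t) - (mu + k * snd (snd (snd (x t)))) * fst (snd (x t)))
    + (1 - I1s/fst (snd (snd (x t))))*(F1 (fst (x t)) (fst (snd (snd (x t)))) - (gam1 + v1 + mu) * fst (snd (snd (x t))))
    + (1 - I2s/snd (snd (snd (x t))))*(F2 (fst (x t)) (snd (snd (snd (x t)))) + k * snd (snd (snd (x t))) * fst (snd (x t)) - (gam2 + v2 + mu) * snd (snd (snd (x t))))
    = Dexp (fst (x t)) (fst (snd (x t))) (fst (snd (snd (x t)))) (snd (snd (snd (x t))))"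
    unfolding Dexp_def
    by (rule lie_eq) (use pp Epos g1s_pos g2s_pos eqs Fform1 Fform2 in auto)
  finally show ?thesis .
qed


end




lemma mono_gen:
  fixes h h' :: "real \<Rightarrow> real"
  assumes "0 \<le> a" "a \<le> b"
    and d: "\<And>t. t \<in> {a..b} \<Longrightarrow> (h has_real_derivative h' t) (at t within {0..})"
    and n: "\<And>t. t \<in> {a..b} \<Longrightarrow> h' t \<le> 0"
  shows "h b \<le> h a"
proof (rule DERIV_nonpos_imp_decreasing_open[OF assms(2)])
  fix t assume t: "a < t" "t < b"
  have "(h has_real_derivative h' t) (at t)"
    by (rule deriv_at0[OF d]) (use t assms(1) in auto)
  moreover have "h' t \<le> 0" using n t by auto
  ultimately show "\<exists>y. (h has_real_derivative y) (at t) \<and> y \<le> 0" by blast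
next
  show "continuous_on {a..b} h"
  proof (rule cont_from_deriv[OF _ assms(1)])
    fix t assume "t \<in> {a..b}"
    from d[OF this] show "\<exists>D. (h has_real_derivative D) (at t within {0..})" by blast
  qed
qed

lemma ge_at_end:
  fixes c :: "real \<Rightarrow> real"
  assumes "continuous_on {0..T} c" "0 < T" "\<And>s. s \<in> {0..<T} \<Longrightarrow> c s \<ge> m"
  shows "c T \<ge> m"
proof -
  have "continuous_on (closure {0..<T}) c" using assms by simp
  moreover have "T \<in> closure {0..<T}" using assms by simp
  ultimately show ?thesis using continuous_ge_on_closure[of "{0..<T}" c T m] assms(3) by blast
qed

context model begin

lemma comp_cont:
  assumes "is_solution Lam mu r k gam1 gam2 v1 v2 F1 F2 x" "0 \<le> a"
  shows "continuous_on {a..b} (\<lambda>s. fst (x s))" "continuous_on {a..b} (\<lambda>s. fst (snd (x s)))"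
        "continuous_on {a..b} (\<lambda>s. fst (snd (snd (x s))))" "continuous_on {a..b} (\<lambda>s. snd (snd (snd (x s))))"
proof -
  have t0: "t \<ge> 0" if "t \<in> {a..b}" for t using that assms(2) by auto
  show "continuous_on {a..b} (\<lambda>s. fst (x s))"
    by (rule cont_from_deriv[OF _ assms(2)]) (use sol_at(2)[OF assms(1) t0] in blast)
  show "continuous_on {a..b} (\<lambda>s. fst (snd (x s)))"
    by (rule cont_from_deriv[OF _ assms(2)]) (use sol_at(3)[OF assms(1) t0] in blast)
  show "continuous_on {a..b} (\<lambda>s. fst (snd (snd (x s))))"
    by (rule cont_from_deriv[OF _ assms(2)]) (use sol_at(4)[OF assms(1) t0] in blast)
  show "continuous_on {a..b} (\<lambda>s. snd (snd (snd (x s))))"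
    by (rule cont_from_deriv[OF _ assms(2)]) (use sol_at(5)[OF assms(1) t0] in blast)
qed

lemma Dexp_le': "P z \<Longrightarrow> Dexp (fst z) (fst (snd z)) (fst (snd (snd z))) (snd (snd (snd z))) \<le> 0"
  unfolding P_def by (intro Dexp_le) auto

lemma L_mono:
  assumes "is_solution Lam mu r k gam1 gam2 v1 v2 F1 F2 x" "0 \<le> a" "a \<le> b"
    and "\<And>t. t \<in> {a..b} \<Longrightarrow> P (x t)"
  shows "Lf (x b) \<le> Lf (x a)"
proof (rule mono_gen[OF assms(2,3)])
  fix t assume t: "t \<in> {a..b}"
  hence t0: "t \<ge> 0" using assms(2) by auto
  show "((\<lambda>s. Lf (x s)) has_real_derivative
           Dexp (fst (x t)) (fst (snd (x t))) (fst (snd (snd (x t)))) (snd (snd (snd (x t))))) (at t within {0..})"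
    by (rule L_deriv[OF assms(1) t0 assms(4)[OF t]])
  show "Dexp (fst (x t)) (fst (snd (x t))) (fst (snd (snd (x t)))) (snd (snd (snd (x t)))) \<le> 0"
    by (rule Dexp_le'[OF assms(4)[OF t]])
qed

definition lo :: "real \<Rightarrow> real \<Rightarrow> real" where "lo a C = a * exp (- (C + a) / a)"

lemma lo_pos: "a > 0 \<Longrightarrow> lo a C > 0" unfolding lo_def by simp

lemma W_le_L:
  assumes "P z"
  shows "W Ss (fst z) \<le> Lf z" "W Vs (fst (snd z)) \<le> Lf z"
        "W I1s (fst (snd (snd z))) \<le> Lf z" "W I2s (snd (snd (snd z))) \<le> Lf z"
proof -
  have "W Ss (fst z) \<ge> 0" "W Vs (fst (snd z)) \<ge> 0" "W I1s (fst (snd (snd z))) \<ge> 0" "W I2s (snd (snd (snd z))) \<ge> 0"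
    using assms Epos unfolding P_def by (auto intro!: W_nonneg)
  thus "W Ss (fst z) \<le> Lf z" "W Vs (fst (snd z)) \<le> Lf z"
        "W I1s (fst (snd (snd z))) \<le> Lf z" "W I2s (snd (snd (snd z))) \<le> Lf z"
    unfolding Lf_def by linarith+
qed

lemma L_nonneg: "P z \<Longrightarrow> Lf z \<ge> 0"
  using W_le_L(1)[of z] W_nonneg[of Ss "fst z"] Epos unfolding P_def by auto

lemma L_lower:
  assumes "P z" "Lf z \<le> C"
  shows "fst z \<ge> lo Ss C" "fst (snd z) \<ge> lo Vs C" "fst (snd (snd z)) \<ge> lo I1s C" "snd (snd (snd z)) \<ge> lo I2s C"
  using W_lower[of Ss "fst z" C] W_lower[of Vs "fst (snd z)" C] W_lower[of I1s "fst (snd (snd z))" C]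
    W_lower[of I2s "snd (snd (snd z))" C] W_le_L[OF assms(1)] assms Epos unfolding P_def lo_def
  by auto

lemma L_upper:
  assumes "P z" "Lf z \<le> C"
  shows "fst z \<le> 2 * (C + Ss)" "fst (snd z) \<le> 2 * (C + Vs)" "fst (snd (snd z)) \<le> 2 * (C + I1s)"
     "snd (snd (snd z)) \<le> 2 * (C + I2s)"
  using W_upper[of Ss "fst z" C] W_upper[of Vs "fst (snd z)" C] W_upper[of I1s "fst (snd (snd z))" C]
    W_upper[of I2s "snd (snd (snd z))" C] W_le_L[OF assms(1)] assms Epos unfolding P_def
  by auto

end


context model begin

lemma positivity:
  assumes sol: "is_solution Lam mu r k gam1 gam2 v1 v2 F1 F2 x" and p0: "P (x 0)" and t1: "t1 \<ge> 0"
  shows "P (x t1)"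
proof (rule ccontr)
  assume np: "\<not> P (x t1)"
  define A where "A = ({0..t1} \<inter> (\<lambda>s. fst (x s)) -` {..0}) \<union> ({0..t1} \<inter> (\<lambda>s. fst (snd (x s))) -` {..0})
     \<union> ({0..t1} \<inter> (\<lambda>s. fst (snd (snd (x s)))) -` {..0}) \<union> ({0..t1} \<inter> (\<lambda>s. snd (snd (snd (x s)))) -` {..0})"
  have Aeq: "s \<in> A \<longleftrightarrow> s \<in> {0..t1} \<and> \<not> P (x s)" for s
    unfolding A_def P_def by auto
  have "closed A" unfolding A_def
    using comp_cont[OF sol order_refl, of t1]
    by (intro closed_Un continuous_closed_preimage) auto
  moreover have "A \<noteq> {}" using Aeq[of t1] np t1 by auto
  moreover have bdd: "bdd_below A" unfolding bdd_below_def using Aeq by auto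
  ultimately have TA: "Inf A \<in> A" using closed_contains_Inf by blast
  define T where "T = Inf A"
  have T: "T \<in> {0..t1}" "\<not> P (x T)" using TA Aeq unfolding T_def by auto
  have Tpos: "T > 0" using T p0 by (cases "T = 0") auto
  have before: "P (x s)" if "s \<in> {0..<T}" for s
  proof (rule ccontr)
    assume "\<not> P (x s)"
    hence "s \<in> A" using Aeq that T by auto
    hence "T \<le> s" unfolding T_def by (rule cInf_lower[OF _ bdd])
    thus False using that by auto
  qed
  define C where "C = Lf (x 0)"
  have Lle: "Lf (x s) \<le> C" if "s \<in> {0..<T}" for s
    unfolding C_def by (rule L_mono[OF sol]) (use that before in auto)
  have "fst (x T) \<ge> lo Ss C"
    by (rule ge_at_end[OF comp_cont(1)[OF sol order_refl] Tpos]) (use L_lower(1) before Lle in blast)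
  moreover have "fst (snd (x T)) \<ge> lo Vs C"
    by (rule ge_at_end[OF comp_cont(2)[OF sol order_refl] Tpos]) (use L_lower(2) before Lle in blast)
  moreover have "fst (snd (snd (x T))) \<ge> lo I1s C"
    by (rule ge_at_end[OF comp_cont(3)[OF sol order_refl] Tpos]) (use L_lower(3) before Lle in blast)
  moreover have "snd (snd (snd (x T))) \<ge> lo I2s C"
    by (rule ge_at_end[OF comp_cont(4)[OF sol order_refl] Tpos]) (use L_lower(4) before Lle in blast)
  ultimately have "P (x T)" unfolding P_def using lo_pos Epos by (smt (verit))
  thus False using T by blast
qed

end



lemma dist_pair_le: "dist (a, b) (c, d) \<le> dist a c + dist b d"
proof -
  have "sqrt ((dist a c)\<^sup>2 + (dist b d)\<^sup>2) \<le> sqrt ((dist a c + dist b d)\<^sup>2)"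
    by (intro real_sqrt_le_mono) (simp add: power2_eq_square algebra_simps)
  also have "\<dots> = dist a c + dist b d" by simp
  finally show ?thesis by (simp add: dist_Pair_Pair)
qed

context model begin

lemma pos4_P: "pos4 z = P z" by (cases z) (simp add: pos4_def P_def)

lemma L_E: "Lf E = 0" unfolding Lf_def E_def using Epos by (simp add: W_at)

lemma dist_E: "dist z E \<le> \<bar>fst z - Ss\<bar> + \<bar>fst (snd z) - Vs\<bar> + \<bar>fst (snd (snd z)) - I1s\<bar> + \<bar>snd (snd (snd z)) - I2s\<bar>"
proof -
  obtain a b c d where z: "z = (a, b, c, d)" by (metis prod_cases4)
  have "dist (a, b, c, d) (Ss, Vs, I1s, I2s) \<le> dist a Ss + dist (b, c, d) (Vs, I1s, I2s)" by (rule dist_pair_le)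
  also have "dist (b, c, d) (Vs, I1s, I2s) \<le> dist b Vs + dist (c, d) (I1s, I2s)" by (rule dist_pair_le)
  also have "dist (c, d) (I1s, I2s) \<le> dist c I1s + dist d I2s" by (rule dist_pair_le)
  finally show ?thesis unfolding z E_def by (simp add: dist_real_def)
qed

lemma close_all: assumes "e > 0" shows "\<exists>c>0. \<forall>z. P z \<and> Lf z < c \<longrightarrow> dist z E < e"
proof -
  obtain c1 where c1: "c1 > 0" "\<forall>v>0. W Ss v < c1 \<longrightarrow> \<bar>v - Ss\<bar> < e/4" using W_close[of Ss "e/4"] Epos assms by auto
  obtain c2 where c2: "c2 > 0" "\<forall>v>0. W Vs v < c2 \<longrightarrow> \<bar>v - Vs\<bar> < e/4" using W_close[of Vs "e/4"] Epos assms by auto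
  obtain c3 where c3: "c3 > 0" "\<forall>v>0. W I1s v < c3 \<longrightarrow> \<bar>v - I1s\<bar> < e/4" using W_close[of I1s "e/4"] Epos assms by auto
  obtain c4 where c4: "c4 > 0" "\<forall>v>0. W I2s v < c4 \<longrightarrow> \<bar>v - I2s\<bar> < e/4" using W_close[of I2s "e/4"] Epos assms by auto
  define c where "c = min (min c1 c2) (min c3 c4)"
  have "c > 0" using c1 c2 c3 c4 by (simp add: c_def)
  moreover have "dist z E < e" if z: "P z" "Lf z < c" for z
  proof -
    have "\<bar>fst z - Ss\<bar> < e/4" using c1(2) W_le_L(1)[OF z(1)] z unfolding P_def c_def by force
    moreover have "\<bar>fst (snd z) - Vs\<bar> < e/4" using c2(2) W_le_L(2)[OF z(1)] z unfolding P_def c_def by force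
    moreover have "\<bar>fst (snd (snd z)) - I1s\<bar> < e/4" using c3(2) W_le_L(3)[OF z(1)] z unfolding P_def c_def by force
    moreover have "\<bar>snd (snd (snd z)) - I2s\<bar> < e/4" using c4(2) W_le_L(4)[OF z(1)] z unfolding P_def c_def by force
    ultimately show ?thesis using dist_E[of z] by linarith
  qed
  ultimately show ?thesis by blast
qed

lemma L_cont_E: "isCont Lf E"
  unfolding Lf_def W_def E_def using Epos by (intro continuous_intros) auto

lemma L_small_near_E: assumes "c > 0" shows "\<exists>d>0. \<forall>z. dist z E < d \<longrightarrow> Lf z < c"
proof -
  have "(Lf \<longlongrightarrow> Lf E) (at E)" using L_cont_E by (simp add: isCont_def)
  hence "eventually (\<lambda>z. dist (Lf z) (Lf E) < c) (at E)" using assms by (simp add: tendsto_iff)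
  then obtain d where d: "d > 0" "\<forall>z. z \<noteq> E \<and> dist z E < d \<longrightarrow> dist (Lf z) (Lf E) < c"
    unfolding eventually_at by auto
  have "Lf z < c" if z: "dist z E < d" for z
  proof (cases "z = E")
    case True thus ?thesis using L_E assms by simp
  next
    case False
    hence "dist (Lf z) (Lf E) < c" using d(2) z by blast
    thus ?thesis using L_E by (simp add: dist_real_def)
  qed
  thus ?thesis using d(1) by blast
qed

lemma L_mono0:
  assumes sol: "is_solution Lam mu r k gam1 gam2 v1 v2 F1 F2 x" and p0: "P (x 0)" "0 \<le> a" "a \<le> b"
  shows "Lf (x b) \<le> Lf (x a)"
proof (rule L_mono[OF sol p0(2,3)])
  fix t assume "t \<in> {a..b}"
  hence "t \<ge> 0" using p0(2) by auto
  thus "P (x t)" by (rule positivity[OF sol p0(1)])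
qed

lemma stable: "\<forall>\<epsilon> > 0. \<exists>\<delta> > 0. \<forall>x. is_solution Lam mu r k gam1 gam2 v1 v2 F1 F2 x \<and> pos4 (x 0)
          \<and> dist (x 0) E < \<delta> \<longrightarrow> (\<forall>t \<ge> 0. dist (x t) E < \<epsilon>)"
proof (intro allI impI)
  fix e :: real assume e: "e > 0"
  obtain c where c: "c > 0" "\<forall>z. P z \<and> Lf z < c \<longrightarrow> dist z E < e" using close_all[OF e] by blast
  obtain d where d: "d > 0" "\<forall>z. dist z E < d \<longrightarrow> Lf z < c" using L_small_near_E[OF c(1)] by blast
  have "dist (x t) E < e" if x: "is_solution Lam mu r k gam1 gam2 v1 v2 F1 F2 x" "pos4 (x 0)" "dist (x 0) E < d"
     and t: "t \<ge> 0" for x t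
  proof -
    have p0: "P (x 0)" using x pos4_P by simp
    have "Lf (x t) \<le> Lf (x 0)" by (rule L_mono0[OF x(1) p0 order_refl t])
    also have "\<dots> < c" using d x by blast
    finally show ?thesis using c positivity[OF x(1) p0 t] by blast
  qed
  thus "\<exists>\<delta> > 0. \<forall>x. is_solution Lam mu r k gam1 gam2 v1 v2 F1 F2 x \<and> pos4 (x 0)
          \<and> dist (x 0) E < \<delta> \<longrightarrow> (\<forall>t \<ge> 0. dist (x t) E < e)" using d(1) by blast
qed

end


context model begin

definition Bx :: "real \<Rightarrow> (real \<times> real \<times> real \<times> real) set" where
  "Bx C = {lo Ss C..2 * (C + Ss)} \<times> {lo Vs C..2 * (C + Vs)} \<times> {lo I1s C..2 * (C + I1s)} \<times> {lo I2s C..2 * (C + I2s)}"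

lemma Bx_P: "z \<in> Bx C \<Longrightarrow> P z"
  unfolding Bx_def P_def using lo_pos[of Ss C] lo_pos[of Vs C] lo_pos[of I1s C] lo_pos[of I2s C] Epos
  by (auto intro: less_le_trans)

lemma Bx_compact: "compact (Bx C)" unfolding Bx_def by (intro compact_Times compact_Icc)

lemma L_cont_B: "continuous_on (Bx C) Lf"
proof -
  have "\<forall>z\<in>Bx C. fst z > 0 \<and> fst (snd z) > 0 \<and> fst (snd (snd z)) > 0 \<and> snd (snd (snd z)) > 0"
    using Bx_P unfolding P_def by blast
  thus ?thesis unfolding Lf_def W_def using Epos by (intro continuous_intros) auto
qed

lemma comp_f_cont:
  "continuous_on (Bx C) (\<lambda>z. f1 (fst z) (fst (snd (snd z))))"
  "continuous_on (Bx C) (\<lambda>z. f2 (fst z) (snd (snd (snd z))))"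
proof -
  have P: "\<forall>z\<in>Bx C. fst z > 0 \<and> fst (snd z) > 0 \<and> fst (snd (snd z)) > 0 \<and> snd (snd (snd z)) > 0"
    using Bx_P unfolding P_def by blast
  have "continuous_on (Bx C) (\<lambda>z. (\<lambda>w. f1 (fst w) (snd w)) ((\<lambda>z. (fst z, fst (snd (snd z)))) z))"
    by (rule continuous_on_compose2[OF f_cont[OF inc1]]) (use P in \<open>auto intro!: continuous_intros simp: Rplus2_def\<close>)
  thus "continuous_on (Bx C) (\<lambda>z. f1 (fst z) (fst (snd (snd z))))" by simp
  have "continuous_on (Bx C) (\<lambda>z. (\<lambda>w. f2 (fst w) (snd w)) ((\<lambda>z. (fst z, snd (snd (snd z)))) z))"
    by (rule continuous_on_compose2[OF f_cont[OF inc2]]) (use P in \<open>auto intro!: continuous_intros simp: Rplus2_def\<close>)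
  thus "continuous_on (Bx C) (\<lambda>z. f2 (fst z) (snd (snd (snd z))))" by simp
qed

lemma Dc_cont: "continuous_on (Bx C) Dc"
proof -
  have P: "\<forall>z\<in>Bx C. fst z > 0 \<and> fst (snd z) > 0 \<and> fst (snd (snd z)) > 0 \<and> snd (snd (snd z)) > 0"
    using Bx_P unfolding P_def by blast
  show ?thesis unfolding Dc_def Let_def using P Epos g1s_pos g2s_pos comp_f_cont[of C]
    by (intro continuous_intros) auto
qed

end


context model begin

lemma key:
  assumes sol: "is_solution Lam mu r k gam1 gam2 v1 v2 F1 F2 x" and p0: "P (x 0)" and c: "c > 0"
  shows "\<exists>t\<ge>0. Lf (x t) < c"
proof (rule ccontr)
  assume "\<not> ?thesis"
  hence ge: "\<And>t. t \<ge> 0 \<Longrightarrow> Lf (x t) \<ge> c" by (meson not_le)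
  define C where "C = Lf (x 0)"
  define K where "K = Bx C \<inter> Lf -` {c..C}"
  have pt: "P (x t)" if "t \<ge> 0" for t using positivity[OF sol p0 that] .
  have LC: "Lf (x t) \<le> C" if "t \<ge> 0" for t unfolding C_def by (rule L_mono0[OF sol p0 order_refl that])
  have inK: "x t \<in> K" if t: "t \<ge> 0" for t
  proof -
    have "x t \<in> Bx C" unfolding Bx_def using L_lower[OF pt[OF t] LC[OF t]] L_upper[OF pt[OF t] LC[OF t]]
      by (simp add: mem_Times_iff)
    thus ?thesis unfolding K_def using ge[OF t] LC[OF t] by auto
  qed
  have "closed K" unfolding K_def
    by (rule continuous_closed_preimage[OF L_cont_B compact_imp_closed[OF Bx_compact]]) simp
  moreover have "bounded K" unfolding K_def by (rule bounded_subset[OF compact_imp_bounded[OF Bx_compact]]) auto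
  ultimately have "compact K" using compact_eq_bounded_closed by blast
  moreover have "K \<noteq> {}" using inK[of 0] by auto
  moreover have "continuous_on K Dc" unfolding K_def by (rule continuous_on_subset[OF Dc_cont]) auto
  ultimately obtain z0 where z0: "z0 \<in> K" "\<And>y. y \<in> K \<Longrightarrow> Dc y \<le> Dc z0"
    using continuous_attains_sup[of K Dc] by blast
  have "z0 \<in> Bx C" using z0(1) unfolding K_def by blast
  hence Pz0: "P z0" by (rule Bx_P)
  have "z0 \<noteq> E" using z0(1) L_E c unfolding K_def by auto
  hence ne: "(fst z0, fst (snd z0), fst (snd (snd z0)), snd (snd (snd z0))) \<noteq> E" by simp
  have "Dc z0 < 0" unfolding Dc_eq[OF Pz0] using Pz0 ne unfolding P_def
    by (intro Dexp_lt) auto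
  define m where "m = - Dc z0"
  have m: "m > 0" using \<open>Dc z0 < 0\<close> by (simp add: m_def)
  define T where "T = C / m + 1"
  have T: "T \<ge> 0" using m L_nonneg[OF p0] by (simp add: T_def C_def)
  have "(\<lambda>s. Lf (x s) + m * s) T \<le> (\<lambda>s. Lf (x s) + m * s) 0"
  proof (rule mono_gen[OF order_refl T])
    fix t assume t: "t \<in> {0..T}"
    hence t0: "t \<ge> 0" by auto
    show "((\<lambda>s. Lf (x s) + m * s) has_real_derivative
           Dexp (fst (x t)) (fst (snd (x t))) (fst (snd (snd (x t)))) (snd (snd (snd (x t)))) + m) (at t within {0..})"
    proof -
      have "((\<lambda>s. m * s) has_real_derivative m) (at t within {0..})"
        using DERIV_cmult[OF DERIV_ident, of m] by simp
      thus ?thesis by (rule DERIV_add[OF L_deriv[OF sol t0 pt[OF t0]]])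
    qed
    have "Dexp (fst (x t)) (fst (snd (x t))) (fst (snd (snd (x t)))) (snd (snd (snd (x t)))) = Dc (x t)"
      using Dc_eq[OF pt[OF t0]] by simp
    also have "\<dots> \<le> Dc z0" using z0(2)[OF inK[OF t0]] .
    finally show "Dexp (fst (x t)) (fst (snd (x t))) (fst (snd (snd (x t)))) (snd (snd (snd (x t)))) + m \<le> 0"
      by (simp add: m_def)
  qed
  hence "Lf (x T) + m * T \<le> C" by (simp add: C_def)
  moreover have "m * T = C + m" using m by (simp add: T_def field_simps)
  ultimately have "Lf (x T) \<le> - m" by simp
  thus False using ge[OF T] c m by simp
qed

lemma attract:
  assumes sol: "is_solution Lam mu r k gam1 gam2 v1 v2 F1 F2 x" and p0: "pos4 (x 0)"
  shows "(x \<longlongrightarrow> E) at_top"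
proof -
  have p0': "P (x 0)" using p0 pos4_P by simp
  show ?thesis unfolding tendsto_iff
  proof (intro allI impI)
    fix e :: real assume e: "e > 0"
    obtain c where c: "c > 0" "\<forall>z. P z \<and> Lf z < c \<longrightarrow> dist z E < e" using close_all[OF e] by blast
    obtain t0 where t0: "t0 \<ge> 0" "Lf (x t0) < c" using key[OF sol p0' c(1)] by blast
    have "dist (x t) E < e" if "t \<ge> t0" for t
    proof -
      have "Lf (x t) \<le> Lf (x t0)" by (rule L_mono0[OF sol p0' t0(1) that])
      hence "Lf (x t) < c" using t0 by simp
      moreover have "P (x t)" using positivity[OF sol p0'] t0 that by simp
      ultimately show ?thesis using c(2) by blast
    qed
    thus "eventually (\<lambda>t. dist (x t) E < e) at_top" unfolding eventually_at_top_linorder by blast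
  qed
qed

lemma gas: "globally_asymptotically_stable Lam mu r k gam1 gam2 v1 v2 F1 F2 (Ss, Vs, I1s, I2s)"
  unfolding globally_asymptotically_stable_def using stable attract unfolding E_def by blast

end

theorem mainTheorem16:
  fixes Lam mu r k gam1 gam2 v1 v2 :: real
    and F1 F2 f1 f2 g1 g2 :: "real \<Rightarrow> real \<Rightarrow> real"
    and Ss Vs I1s I2s :: real
  assumes "Lam > 0" "mu > 0" "r > 0" "k > 0" "gam1 > 0" "gam2 > 0" "v1 \<ge> 0" "v2 \<ge> 0"
    and "incidence_hyps F1 f1 g1" and "incidence_hyps F2 f2 g2"
    and "is_equilibrium Lam mu r k gam1 gam2 v1 v2 F1 F2 (Ss, Vs, I1s, I2s)"
    and "Ss > 0" "Vs > 0" "I1s > 0" "I2s > 0"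
    and "\<And>S V I1 I2. S > 0 \<Longrightarrow> V > 0 \<Longrightarrow> I1 > 0 \<Longrightarrow> I2 > 0 \<Longrightarrow>
           (S, V, I1, I2) \<noteq> (Ss, Vs, I1s, I2s) \<Longrightarrow>
           F1 Ss I1s * (2 - Ss / S - S * g1 S I1 / (Ss * g1 Ss I1s))
         + F2 Ss I2s * (2 - Ss / S - S * g2 S I2 / (Ss * g2 Ss I2s))
         + r * Ss * (3 - Ss / S - V / Vs - S * Vs / (Ss * V))
         + mu * Ss * (2 - Ss / S - S / Ss)
         + I1 * (Ss * g1 S I1 - (gam1 + v1 + mu))
         + I2 * (Ss * g2 S I2 + k * Vs - (gam2 + v2 + mu)) < 0"
  shows "globally_asymptotically_stable Lam mu r k gam1 gam2 v1 v2 F1 F2 (Ss, Vs, I1s, I2s)"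
proof -
  interpret model Lam mu r k gam1 gam2 v1 v2 F1 F2 f1 f2 g1 g2 Ss Vs I1s I2s
    by (rule model.intro) (use assms in auto)
  show ?thesis by (rule gas)
qed


end
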